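(* Let $S\subseteq\mathbb Z^d$ be a standard semigroup, let $T_\bullet$ be a $p$-system of ideals of $S$, and let $H$ be any truncating halfspace for $\operatorname{cone}(S)$. Then \[\lim_{q\to\infty}\frac{\#(T_q\cap qH)}{q^d}=\operatorname{vol}_{\mathbb R^d}\big(\Delta(S,T_\bullet)\cap H\big).\]
   Context: $p$ prime; $q$ ranges over powers $p^e$, $e\ge0$. A semigroup is a subset of $\mathbb Z^d$ containing $0$ and closed under addition; an ideal of a semigroup $S$ is a subset $T\subseteq S$ with $S+T\subseteq T$. $\operatorname{cone}(U)$ is the closure of the set of nonnegative real linear combinations of elements of $U$. A closed convex cone $C\subseteq\mathbb R^d$ is pointed if there exists $\mathbf b\in\mathbb R^d$ with $\langle\mathbf u,\mathbf b\rangle>0$ for all nonzero $\mathbf u\in C$; for such $\mathbf b$ and a real $\alpha\ge0$, $H=\{\mathbf u\in\mathbb R^d:\langle\mathbf u,\mathbf b\rangle<\alpha\}$ is called a truncating halfspace for $C$. A semigroup $S$ is standard if $S-S=\mathbb Z^d$ and $\operatorname{cone}(S)$ is pointed. A $p$-system of ideals of $S$ is a sequence $T_\bullet=\{T_q\}$ of ideals of $S$ indexed by powers $q$ of $p$ with $pT_q\subseteq T_{pq}$ for all $q$. The $p$-body is $\Delta(S,T_\bullet)=\bigcup_q\big(\tfrac1qT_q+\operatorname{cone}(S)\big)$ (Minkowski sums). $qH=\{q\mathbf u:\mathbf u\in H\}$; $\operatorname{vol}_{\mathbb R^d}$ is Lebesgue measure. *)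

theory Defs
  imports "HOL-Analysis.Analysis"
begin

text \<open>Lattice points of Z^d are modelled as int^'n, with d = CARD('n).\<close>

definition rvec :: "int^'n \<Rightarrow> real^'n" where
  "rvec x = (\<chi> i. real_of_int (x $ i))"

definition is_semigroup :: "(int^'n) set \<Rightarrow> bool" where
  "is_semigroup S \<longleftrightarrow> 0 \<in> S \<and> (\<forall>x\<in>S. \<forall>y\<in>S. x + y \<in> S)"

definition is_ideal :: "(int^'n) set \<Rightarrow> (int^'n) set \<Rightarrow> bool" where
  "is_ideal S T \<longleftrightarrow> T \<subseteq> S \<and> (\<forall>s\<in>S. \<forall>t\<in>T. s + t \<in> T)"

definition cone_of :: "(real^'n) set \<Rightarrow> (real^'n) set" where
  "cone_of U = closure {x. \<exists>F c. finite F \<and> F \<subseteq> U \<and> (\<forall>u\<in>F. c u \<ge> 0)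
                              \<and> x = (\<Sum>u\<in>F. c u *\<^sub>R u)}"

definition pointed :: "(real^'n) set \<Rightarrow> bool" where
  "pointed C \<longleftrightarrow> (\<exists>b. \<forall>u\<in>C. u \<noteq> 0 \<longrightarrow> inner u b > 0)"

definition truncating_halfspace :: "(real^'n) set \<Rightarrow> (real^'n) set \<Rightarrow> bool" where
  "truncating_halfspace C H \<longleftrightarrow>
     (\<exists>b \<alpha>. (\<forall>u\<in>C. u \<noteq> 0 \<longrightarrow> inner u b > 0) \<and> \<alpha> \<ge> 0 \<and> H = {u. inner u b < \<alpha>})"

definition standard_semigroup :: "(int^'n) set \<Rightarrow> bool" where
  "standard_semigroup S \<longleftrightarrow> is_semigroup S \<and> {x - y | x y. x \<in> S \<and> y \<in> S} = UNIV
      \<and> pointed (cone_of (rvec ` S))"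

definition int_scale :: "int \<Rightarrow> int^'n \<Rightarrow> int^'n" where
  "int_scale k x = (\<chi> i. k * x $ i)"

text \<open>T is indexed by q; only the values at powers q = p^e matter.\<close>
definition p_system :: "nat \<Rightarrow> (int^'n) set \<Rightarrow> (nat \<Rightarrow> (int^'n) set) \<Rightarrow> bool" where
  "p_system p S T \<longleftrightarrow> (\<forall>e. is_ideal S (T (p ^ e))
      \<and> int_scale (int p) ` T (p ^ e) \<subseteq> T (p ^ Suc e))"

definition p_body :: "nat \<Rightarrow> (int^'n) set \<Rightarrow> (nat \<Rightarrow> (int^'n) set) \<Rightarrow> (real^'n) set" where
  "p_body p S T = (\<Union>e. {(1 / real (p ^ e)) *\<^sub>R rvec t + c | t c. t \<in> T (p ^ e) \<and> c \<in> cone_of (rvec ` S)})"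

end

theory Submission
  imports Defs
begin


definition cf :: "(real^'n) set \<Rightarrow> (real^'n) set" where
 "cf U = {x. \<exists>F c. finite F \<and> F \<subseteq> U \<and> (\<forall>u\<in>F. c u \<ge> 0) \<and> x = (\<Sum>u\<in>F. c u *\<^sub>R u)}"

lemma cone_of_cf: "cone_of U = closure (cf U)" by (simp add: cone_of_def cf_def)

lemma cf_0: "0 \<in> cf U"
  unfolding cf_def by (rule CollectI, rule exI[of _ "{}"]) auto

lemma cf_base: "u \<in> U \<Longrightarrow> u \<in> cf U"
  unfolding cf_def by (rule CollectI, rule exI[of _ "{u}"], rule exI[of _ "\<lambda>_. 1"]) auto

lemma cf_scale: assumes "x \<in> cf U" "a \<ge> 0" shows "a *\<^sub>R x \<in> cf U"
proof -
  obtain F c where F: "finite F" "F \<subseteq> U" "\<forall>u\<in>F. c u \<ge> 0" "x = (\<Sum>u\<in>F. c u *\<^sub>R u)"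
    using assms(1) unfolding cf_def by blast
  show ?thesis unfolding cf_def
    apply (rule CollectI, rule exI[of _ F], rule exI[of _ "\<lambda>u. a * c u"])
    using F assms(2) by (auto simp: scaleR_sum_right)
qed

lemma cf_add: assumes "x \<in> cf U" "y \<in> cf U" shows "x + y \<in> cf U"
proof -
  obtain F1 c1 where F1: "finite F1" "F1 \<subseteq> U" "\<forall>u\<in>F1. c1 u \<ge> 0" "x = (\<Sum>u\<in>F1. c1 u *\<^sub>R u)"
    using assms(1) unfolding cf_def by blast
  obtain F2 c2 where F2: "finite F2" "F2 \<subseteq> U" "\<forall>u\<in>F2. c2 u \<ge> 0" "y = (\<Sum>u\<in>F2. c2 u *\<^sub>R u)"
    using assms(2) unfolding cf_def by blast
  define c where "c u = (if u \<in> F1 then c1 u else 0) + (if u \<in> F2 then c2 u else 0)" for u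
  have e1: "(\<Sum>u\<in>F1\<union>F2. (if u \<in> F1 then c1 u else 0) *\<^sub>R u) = x"
    unfolding F1(4) by (rule sum.mono_neutral_cong_right) (use F1 F2 in auto)
  have e2: "(\<Sum>u\<in>F1\<union>F2. (if u \<in> F2 then c2 u else 0) *\<^sub>R u) = y"
    unfolding F2(4) by (rule sum.mono_neutral_cong_right) (use F1 F2 in auto)
  have "x + y = (\<Sum>u\<in>F1\<union>F2. c u *\<^sub>R u)"
    unfolding c_def scaleR_add_left sum.distrib e1 e2 ..
  then show ?thesis unfolding cf_def
    apply (intro CollectI exI[of _ "F1 \<union> F2"] exI[of _ c])
    using F1 F2 by (auto simp: c_def)
qed

lemma cf_sum: "finite I \<Longrightarrow> (\<And>i. i \<in> I \<Longrightarrow> f i \<in> cf U) \<Longrightarrow> sum f I \<in> cf U"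
  by (induction I rule: finite_induct) (auto simp: cf_0 cf_add)

lemma cf_mono: "U \<subseteq> V \<Longrightarrow> cf U \<subseteq> cf V"
  unfolding cf_def by blast

lemma convex_cf: "convex (cf U)"
  by (auto intro!: convexI cf_add cf_scale)

lemma cone_cf: "cone (cf U)"
  by (auto simp: cone_def intro!: cf_scale)



lemma rvec_add: "rvec (x + y) = rvec x + rvec y"
  by (simp add: rvec_def vec_eq_iff)
lemma rvec_diff: "rvec (x - y) = rvec x - rvec y"
  by (simp add: rvec_def vec_eq_iff)
lemma rvec_0: "rvec 0 = 0"
  by (simp add: rvec_def vec_eq_iff)
lemma rvec_sum: "rvec (sum f I) = (\<Sum>i\<in>I. rvec (f i))"
  by (induction I rule: infinite_finite_induct) (auto simp: rvec_0 rvec_add)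
lemma rvec_int_scale: "rvec (int_scale k x) = real_of_int k *\<^sub>R rvec x"
  by (simp add: rvec_def int_scale_def vec_eq_iff)
lemma inj_rvec: "inj rvec"
  by (auto simp: inj_def rvec_def vec_eq_iff)
lemma rvec_nth: "rvec x $ i = real_of_int (x $ i)"
  by (simp add: rvec_def)

lemma sg_sum: assumes "is_semigroup S" "finite I" "\<And>i. i \<in> I \<Longrightarrow> f i \<in> S" shows "sum f I \<in> S"
  using assms(2,3) by (induction I rule: finite_induct) (use assms(1) in \<open>auto simp: is_semigroup_def\<close>)

lemma sg_scale: assumes "is_semigroup S" "x \<in> S" shows "int_scale (int n) x \<in> S"
proof (induction n)
  case 0
  have "int_scale (int 0) x = 0" by (simp add: int_scale_def vec_eq_iff)
  then show ?case using assms by (simp add: is_semigroup_def)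
next
  case (Suc n)
  have "int_scale (int (Suc n)) x = int_scale (int n) x + x"
    by (simp add: int_scale_def vec_eq_iff algebra_simps)
  then show ?case using Suc assms by (simp add: is_semigroup_def)
qed

lemma finite_lattice_ball: "finite {z::int^'n. norm (rvec z) \<le> R}"
proof -
  define N where "N = \<lceil>R\<rceil>"
  have "{z::int^'n. norm (rvec z) \<le> R} \<subseteq> vec_lambda ` (PiE UNIV (\<lambda>_. {-N..N}))"
  proof
    fix z :: "int^'n" assume "z \<in> {z. norm (rvec z) \<le> R}"
    then have h: "norm (rvec z) \<le> R" by simp
    have "\<bar>z $ i\<bar> \<le> N" for i
    proof -
      have "\<bar>rvec z $ i\<bar> \<le> norm (rvec z)" by (rule component_le_norm_cart)
      then have "real_of_int \<bar>z $ i\<bar> \<le> R" using h by (simp add: rvec_nth)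
      then show ?thesis unfolding N_def by linarith
    qed
    then have "z $ i \<in> {-N..N}" for i by (simp add: abs_le_iff) (meson minus_le_iff)
    then have "vec_nth z \<in> PiE UNIV (\<lambda>_. {-N..N})" by (simp add: PiE_UNIV_domain)
    then show "z \<in> vec_lambda ` (PiE UNIV (\<lambda>_. {-N..N}))"
      by (metis image_eqI vec_lambda_eta)
  qed
  moreover have "finite (vec_lambda ` (PiE UNIV (\<lambda>_. {-N..N})) :: (int^'n) set)"
    by (intro finite_imageI finite_PiE) auto
  ultimately show ?thesis by (rule finite_subset)
qed

lemma saturation:
  fixes S G :: "(int^'n) set"
  assumes sg: "is_semigroup S" and gp: "{x - y | x y. x \<in> S \<and> y \<in> S} = UNIV"
    and G: "finite G" "G \<subseteq> S"
  shows "\<exists>w\<in>S. \<forall>z. rvec z \<in> cf (rvec ` G) \<longrightarrow> w + z \<in> S"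
proof -
  define R where "R = (\<Sum>g\<in>G. norm (rvec g))"
  define Rs where "Rs = {r::int^'n. norm (rvec r) \<le> R}"
  have finRs: "finite Rs" unfolding Rs_def by (rule finite_lattice_ball)
  have ex: "\<exists>ab. fst ab \<in> S \<and> snd ab \<in> S \<and> r = fst ab - snd ab" for r
  proof -
    have "r \<in> {x - y | x y. x \<in> S \<and> y \<in> S}" using gp by simp
    then obtain x y where "x \<in> S" "y \<in> S" "r = x - y" by blast
    then show ?thesis by (intro exI[of _ "(x,y)"]) simp
  qed
  define ab where "ab r = (SOME ab. fst ab \<in> S \<and> snd ab \<in> S \<and> r = fst ab - snd ab)" for r
  have ab: "fst (ab r) \<in> S \<and> snd (ab r) \<in> S \<and> r = fst (ab r) - snd (ab r)" for r
    unfolding ab_def by (rule someI_ex[OF ex])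
  define w where "w = (\<Sum>r\<in>Rs. snd (ab r))"
  have wS: "w \<in> S" unfolding w_def using sg finRs ab by (intro sg_sum) auto
  have "w + z \<in> S" if z: "rvec z \<in> cf (rvec ` G)" for z
  proof -
    obtain F c where F: "finite F" "F \<subseteq> rvec ` G" "\<forall>u\<in>F. c u \<ge> 0" "rvec z = (\<Sum>u\<in>F. c u *\<^sub>R u)"
      using z unfolding cf_def by blast
    define G' where "G' = {g\<in>G. rvec g \<in> F}"
    have FG: "F = rvec ` G'" using F(2) unfolding G'_def by auto
    have G'G: "G' \<subseteq> G" unfolding G'_def by auto
    have finG': "finite G'" using G(1) G'G by (rule rev_finite_subset)
    define d where "d g = c (rvec g)" for g
    have d0: "d g \<ge> 0" if "g \<in> G'" for g using F(3) that unfolding d_def G'_def by auto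
    have zsum: "rvec z = (\<Sum>g\<in>G'. d g *\<^sub>R rvec g)"
      unfolding F(4) FG d_def
      by (subst sum.reindex) (use inj_rvec in \<open>auto intro: inj_on_subset\<close>)
    define s where "s = (\<Sum>g\<in>G'. int_scale (int (nat \<lfloor>d g\<rfloor>)) g)"
    have sS: "s \<in> S" unfolding s_def using sg finG' G'G G(2)
      by (intro sg_sum sg_scale) auto
    have rs: "rvec s = (\<Sum>g\<in>G'. real_of_int \<lfloor>d g\<rfloor> *\<^sub>R rvec g)"
      unfolding s_def rvec_sum rvec_int_scale
      by (rule sum.cong) (use d0 in auto)
    define r where "r = z - s"
    have rr: "rvec r = (\<Sum>g\<in>G'. (d g - real_of_int \<lfloor>d g\<rfloor>) *\<^sub>R rvec g)"
      unfolding r_def rvec_diff zsum rs by (simp add: scaleR_diff_left sum_subtractf)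
    have "norm (rvec r) \<le> (\<Sum>g\<in>G'. norm ((d g - real_of_int \<lfloor>d g\<rfloor>) *\<^sub>R rvec g))"
      unfolding rr by (rule norm_sum)
    also have "\<dots> \<le> (\<Sum>g\<in>G'. norm (rvec g))"
    proof (rule sum_mono)
      fix g assume "g \<in> G'"
      have "0 \<le> d g - real_of_int \<lfloor>d g\<rfloor>" "d g - real_of_int \<lfloor>d g\<rfloor> \<le> 1" by linarith+
      then show "norm ((d g - real_of_int \<lfloor>d g\<rfloor>) *\<^sub>R rvec g) \<le> norm (rvec g)"
        by (simp add: mult_left_le_one_le)
    qed
    also have "\<dots> \<le> R" unfolding R_def
      by (rule sum_mono2[OF G(1) G'G]) auto
    finally have rRs: "r \<in> Rs" unfolding Rs_def by simp
    have "w = snd (ab r) + (\<Sum>r'\<in>Rs - {r}. snd (ab r'))"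
      unfolding w_def using finRs rRs by (simp add: sum.remove)
    then have "w + z = s + fst (ab r) + (\<Sum>r'\<in>Rs - {r}. snd (ab r'))"
      using ab[of r] unfolding r_def by (simp add: algebra_simps)
    moreover have "(\<Sum>r'\<in>Rs - {r}. snd (ab r')) \<in> S"
      using sg finRs ab by (intro sg_sum) auto
    ultimately show ?thesis using sS ab[of r] sg by (simp add: is_semigroup_def)
  qed
  then show ?thesis using wS by blast
qed



lemma closed_lebesgue: "closed S \<Longrightarrow> (S::'a::euclidean_space set) \<in> sets lebesgue"
  by (metis borel_closed sets_completionI_sets sets_lborel)
lemma open_lebesgue: "open S \<Longrightarrow> (S::'a::euclidean_space set) \<in> sets lebesgue"
  by (metis borel_open sets_completionI_sets sets_lborel)

locale setting =
  fixes p :: nat and S :: "(int^'n) set" and T :: "nat \<Rightarrow> (int^'n) set" and b :: "real^'n"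
  assumes p2: "2 \<le> p" and sg: "is_semigroup S" and gp: "{x - y |x y. x \<in> S \<and> y \<in> S} = UNIV"
    and ps: "p_system p S T" and pos: "\<And>u. u \<in> cone_of (rvec ` S) \<Longrightarrow> u \<noteq> 0 \<Longrightarrow> inner u b > 0"
begin

definition "CF = cf (rvec ` S)"
definition "CC = cone_of (rvec ` S)"
lemma CC_eq: "CC = closure CF" by (simp add: CC_def CF_def cone_of_cf)
lemma CF_CC: "CF \<subseteq> CC" using closure_subset CC_eq by blast
lemma cone_CC: "cone CC" unfolding CC_eq CF_def by (intro cone_closure cone_cf)
lemma closed_CC: "closed CC" by (simp add: CC_eq)
lemma convex_CF: "convex CF" by (simp add: CF_def convex_cf)
lemma inner_CC: "u \<in> CC \<Longrightarrow> inner u b \<ge> 0"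
  using pos[of u] by (cases "u = 0") (auto simp: CC_def)
lemma rvec_S_CF: "s \<in> S \<Longrightarrow> rvec s \<in> CF" unfolding CF_def by (rule cf_base) auto
lemma CC_scale: "u \<in> CC \<Longrightarrow> a \<ge> 0 \<Longrightarrow> a *\<^sub>R u \<in> CC" using cone_CC by (simp add: cone_def)
lemma CF_scale: "u \<in> CF \<Longrightarrow> a \<ge> 0 \<Longrightarrow> a *\<^sub>R u \<in> CF" unfolding CF_def by (rule cf_scale)

lemma b_nz: "b \<noteq> 0"
proof
  assume b0: "b = 0"
  have "(1::int^'n) \<in> {x - y |x y. x \<in> S \<and> y \<in> S}" using gp by simp
  then obtain x y where xy: "x \<in> S" "y \<in> S" "(1::int^'n) = x - y" by blast
  have "(1::int^'n) \<noteq> 0" by (simp add: vec_eq_iff)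
  then have "x \<noteq> y" using xy by auto
  then have "rvec x \<noteq> 0 \<or> rvec y \<noteq> 0" using inj_rvec rvec_0 by (metis injD)
  then obtain u where "u \<in> CC" "u \<noteq> 0" using xy rvec_S_CF CF_CC by blast
  then show False using pos[of u] b0 by (simp add: CC_def)
qed

lemma CC_bound: "\<exists>R. \<forall>u\<in>CC. inner u b \<le> \<beta> \<longrightarrow> norm u \<le> R"
proof (cases "CC \<inter> sphere 0 1 = {}")
  case True
  have "u = 0" if "u \<in> CC" for u
  proof (rule ccontr)
    assume "u \<noteq> 0"
    then have "(1 / norm u) *\<^sub>R u \<in> CC \<inter> sphere 0 1" using that CC_scale by auto
    then show False using True by blast
  qed
  then show ?thesis by (intro exI[of _ 0]) auto
next
  case False
  have cpt: "compact (CC \<inter> sphere 0 1)" by (intro closed_Int_compact closed_CC compact_sphere)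
  have "\<exists>x\<in>CC \<inter> sphere 0 1. \<forall>y\<in>CC \<inter> sphere 0 1. inner x b \<le> inner y b"
    by (rule continuous_attains_inf[OF cpt False]) (intro continuous_intros)
  then obtain u0 where u0: "u0 \<in> CC \<inter> sphere 0 1" "\<And>u. u \<in> CC \<inter> sphere 0 1 \<Longrightarrow> inner u0 b \<le> inner u b"
    by blast
  define \<delta> where "\<delta> = inner u0 b"
  have dpos: "\<delta> > 0" unfolding \<delta>_def using u0(1) by (intro pos) (auto simp: CC_def)
  have "norm u \<le> max 0 (\<beta> / \<delta>)" if u: "u \<in> CC" "inner u b \<le> \<beta>" for u
  proof (cases "u = 0")
    case False
    define w where "w = (1 / norm u) *\<^sub>R u"
    have "w \<in> CC \<inter> sphere 0 1" unfolding w_def using u False CC_scale by auto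
    then have "\<delta> \<le> inner w b" using u0 unfolding \<delta>_def by blast
    moreover have "inner u b = norm u * inner w b" unfolding w_def using False by simp
    ultimately have "norm u * \<delta> \<le> \<beta>" using u(2) by (metis mult_left_mono norm_ge_zero order_trans)
    then have "norm u \<le> \<beta> / \<delta>" using dpos by (simp add: pos_le_divide_eq)
    then show ?thesis by simp
  qed simp
  then show ?thesis by blast
qed

lemma T_S: "T (p^e) \<subseteq> S" using ps unfolding p_system_def is_ideal_def by blast
lemma T_ideal: "s \<in> S \<Longrightarrow> t \<in> T (p^e) \<Longrightarrow> s + t \<in> T (p^e)"
  using ps unfolding p_system_def is_ideal_def by blast
lemma T_step: "t \<in> T (p^e) \<Longrightarrow> int_scale (int p) t \<in> T (p^Suc e)"
  using ps unfolding p_system_def by blast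
lemma T_scale: "t \<in> T (p^e) \<Longrightarrow> int_scale (int (p^k)) t \<in> T (p^(e+k))"
proof (induction k)
  case 0
  have "int_scale (int (p^0)) t = t" by (simp add: int_scale_def vec_eq_iff)
  then show ?case using 0 by simp
next
  case (Suc k)
  have "int_scale (int (p^Suc k)) t = int_scale (int p) (int_scale (int (p^k)) t)"
    by (simp add: int_scale_def vec_eq_iff mult.assoc)
  then show ?case using T_step[OF Suc.IH[OF Suc.prems]] by simp
qed

definition Dl :: "nat \<Rightarrow> (real^'n) set" where
  "Dl e = {(1 / real (p ^ e)) *\<^sub>R rvec t + c | t c. t \<in> T (p ^ e) \<and> c \<in> CC}"

lemma body_eq: "p_body p S T = (\<Union>e. Dl e)" by (simp add: p_body_def Dl_def CC_def)

lemma Dl_mono: "Dl e \<subseteq> Dl (Suc e)"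
proof
  fix x assume "x \<in> Dl e"
  then obtain t c where tc: "t \<in> T (p^e)" "c \<in> CC" "x = (1 / real (p ^ e)) *\<^sub>R rvec t + c"
    unfolding Dl_def by blast
  have "(1 / real (p ^ Suc e)) *\<^sub>R rvec (int_scale (int p) t) = (1 / real (p ^ e)) *\<^sub>R rvec t"
    using p2 by (simp add: rvec_int_scale)
  then show "x \<in> Dl (Suc e)" unfolding Dl_def using T_step[OF tc(1)] tc by (metis (mono_tags, lifting) mem_Collect_eq)
qed

lemma incseq_Dl: "incseq Dl"
  using Dl_mono by (simp add: incseq_Suc_iff)

lemma Dl_UN: "Dl e = (\<Union>t\<in>T(p^e). (+) ((1/real(p^e)) *\<^sub>R rvec t) ` CC)"
  unfolding Dl_def by auto

lemma Dl_sets: "Dl e \<in> sets lebesgue"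
proof -
  have "closed ((+) a ` CC)" for a by (simp add: closed_translation closed_CC)
  then show ?thesis unfolding Dl_UN by (intro sets.countable_UN' closed_lebesgue) auto
qed

lemma body_sets: "p_body p S T \<in> sets lebesgue"
proof -
  have "range Dl \<subseteq> sets lebesgue" using Dl_sets by blast
  then show ?thesis unfolding body_eq by (rule sets.countable_UN)
qed

lemma Dl_point_CC: "t \<in> T (p^e) \<Longrightarrow> (1 / real (p ^ e)) *\<^sub>R rvec t \<in> CC"
  using T_S rvec_S_CF CF_scale CF_CC by (meson in_mono divide_nonneg_nonneg of_nat_0_le_iff zero_le_one)

lemma body_bounded: "bounded (p_body p S T \<inter> {u. inner u b \<le> \<beta>})"
proof -
  obtain R where R: "\<And>u. u \<in> CC \<Longrightarrow> inner u b \<le> \<beta> \<Longrightarrow> norm u \<le> R" using CC_bound by blast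
  have "norm x \<le> 2 * R" if xin: "x \<in> p_body p S T" and xb: "inner x b \<le> \<beta>" for x
  proof -
    obtain e where "x \<in> Dl e" using xin unfolding body_eq by blast
    then obtain t c where tc: "t \<in> T (p^e)" "c \<in> CC" "x = (1 / real (p ^ e)) *\<^sub>R rvec t + c"
      unfolding Dl_def by blast
    define a where "a = (1 / real (p ^ e)) *\<^sub>R rvec t"
    have a: "a \<in> CC" unfolding a_def using Dl_point_CC tc(1) .
    have ia: "inner a b \<ge> 0" "inner c b \<ge> 0" using a tc(2) inner_CC by auto
    have "inner x b = inner a b + inner c b" unfolding tc(3) a_def by (simp add: inner_add_left)
    then have "inner a b \<le> \<beta>" "inner c b \<le> \<beta>" using xb ia by linarith+
    then have "norm a \<le> R" "norm c \<le> R" using R a tc(2) by auto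
    then show ?thesis unfolding tc(3) a_def[symmetric] using norm_triangle_ineq[of a c] by linarith
  qed
  then show ?thesis unfolding bounded_iff by blast
qed

end


definition cube :: "real \<Rightarrow> int^'n \<Rightarrow> (real^'n) set" where
  "cube q z = {x. \<forall>i. real_of_int (z$i) / q \<le> x$i \<and> x$i < (real_of_int (z$i) + 1) / q}"

lemma cube_floor_eq: assumes "q > 0" "x \<in> cube q z" shows "z $ i = \<lfloor>q * x $ i\<rfloor>"
proof -
  have "real_of_int (z$i) / q \<le> x$i" "x$i < (real_of_int (z$i) + 1) / q" using assms(2) by (auto simp: cube_def)
  then have "real_of_int (z$i) \<le> q * x$i" "q * x$i < real_of_int (z$i) + 1"
    using assms(1) by (simp_all add: pos_divide_le_eq pos_less_divide_eq mult.commute)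
  then show ?thesis by (metis floor_unique)
qed

lemma cube_disj: assumes "q > 0" "z \<noteq> z'" shows "cube q z \<inter> cube q z' = {}"
proof (rule ccontr)
  assume "cube q z \<inter> cube q z' \<noteq> {}"
  then obtain x where "x \<in> cube q z" "x \<in> cube q z'" by blast
  then have "z $ i = z' $ i" for i using cube_floor_eq[OF assms(1)] by metis
  then show False using assms(2) by (simp add: vec_eq_iff)
qed

lemma cube_floor: assumes "q > 0" shows "x \<in> cube q (\<chi> i. \<lfloor>q * x$i\<rfloor>)"
proof -
  have "real_of_int \<lfloor>q * x$i\<rfloor> / q \<le> x$i \<and> x$i < (real_of_int \<lfloor>q * x$i\<rfloor> + 1) / q" for i
  proof -
    have "real_of_int \<lfloor>q * x$i\<rfloor> \<le> q * x$i" "q * x$i < real_of_int \<lfloor>q * x$i\<rfloor> + 1" by linarith+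
    then show ?thesis using assms by (simp add: pos_divide_le_eq pos_less_divide_eq mult.commute)
  qed
  then show ?thesis by (simp add: cube_def)
qed

lemma cube_corner: assumes "q > 0" shows "(1/q) *\<^sub>R rvec z \<in> cube q z"
  using assms by (simp add: cube_def rvec_def divide_strict_right_mono)

lemma cube_param: assumes "q > 0" "x \<in> cube q z"
  shows "\<exists>y. (\<forall>i. 0 \<le> y$i \<and> y$i \<le> 1) \<and> x = (1/q) *\<^sub>R (rvec z + y)"
proof (intro exI conjI allI)
  define y where "y = q *\<^sub>R x - rvec z"
  fix i
  have h: "real_of_int (z$i) / q \<le> x$i" "x$i < (real_of_int (z$i) + 1) / q" using assms(2) by (auto simp: cube_def)
  then have "real_of_int (z$i) \<le> q * x$i" "q * x$i < real_of_int (z$i) + 1"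
    using assms(1) by (simp_all add: pos_divide_le_eq pos_less_divide_eq mult.commute)
  then show "0 \<le> (q *\<^sub>R x - rvec z) $ i" "(q *\<^sub>R x - rvec z) $ i \<le> 1" by (simp_all add: rvec_def)
next
  show "x = (1/q) *\<^sub>R (rvec z + (q *\<^sub>R x - rvec z))" using assms(1) by simp
qed

lemma cube_diam: fixes x y :: "real^'n" assumes "q > 0" "x \<in> cube q z" "y \<in> cube q z"
  shows "norm (x - y) \<le> real CARD('n) / q"
proof -
  have h: "\<bar>(x - y) $ i\<bar> \<le> 1 / q" for i
  proof -
    have "real_of_int (z$i) / q \<le> x$i" "x$i < (real_of_int (z$i) + 1) / q"
      "real_of_int (z$i) / q \<le> y$i" "y$i < (real_of_int (z$i) + 1) / q" using assms(2,3) by (auto simp: cube_def)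
    moreover have "(real_of_int (z$i) + 1) / q = real_of_int (z$i) / q + 1 / q" by (simp add: add_divide_distrib)
    ultimately show ?thesis by auto
  qed
  have "(\<Sum>i\<in>UNIV. \<bar>(x - y) $ i\<bar>) \<le> (\<Sum>i\<in>(UNIV::'n set). 1 / q)" by (intro sum_mono h)
  then show ?thesis using norm_le_l1_cart[of "x - y"] by simp
qed


lemma cube_meas:
  fixes z :: "int^'n"
  assumes "q > 0"
  shows "cube q z \<in> lmeasurable" "measure lebesgue (cube q z) = (1/q) ^ CARD('n)"
proof -
  define a :: "real^'n" where "a = (\<chi> i. real_of_int (z$i) / q)"
  define c :: "real^'n" where "c = (\<chi> i. (real_of_int (z$i) + 1) / q)"
  have sub1: "box a c \<subseteq> cube q z" by (auto simp: mem_box_cart cube_def a_def c_def less_imp_le)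
  have sub2: "cube q z \<subseteq> cbox a c" by (auto simp: mem_box_cart cube_def a_def c_def less_imp_le)
  have neg: "negligible (cbox a c - box a c)"
    using negligible_convex_frontier[of "cbox a c"] by (simp add: frontier_cbox)
  have "negligible (cbox a c - cube q z)" using sub1 by (intro negligible_subset[OF neg]) auto
  then have n2: "cbox a c - cube q z \<in> sets lebesgue" by (rule negligible_imp_sets)
  have "cbox a c \<in> sets lebesgue" using lmeasurable_cbox fmeasurableD by blast
  then have "cbox a c - (cbox a c - cube q z) \<in> sets lebesgue"
    using n2 by (rule sets.Diff)
  moreover have "cbox a c - (cbox a c - cube q z) = cube q z" using sub2 by blast
  ultimately have "cube q z \<in> sets lebesgue" by simp
  then show "cube q z \<in> lmeasurable"
    by (rule bounded_set_imp_lmeasurable[rotated]) (rule bounded_subset[OF bounded_cbox sub2])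
  have "measure lebesgue (cube q z) = measure lebesgue (cbox a c)"
    by (rule measure_negligible_symdiff) (use sub1 sub2 in \<open>auto intro: negligible_subset[OF neg]\<close>)
  also have "\<dots> = (\<Prod>i\<in>UNIV. c$i - a$i)"
  proof -
    have "cbox a c \<noteq> {}" using sub1 sub2 cube_corner[OF assms, of z] by blast
    then show ?thesis by (simp add: content_cbox_cart)
  qed
  also have "\<dots> = (1/q) ^ CARD('n)" by (simp add: a_def c_def add_divide_distrib)
  finally show "measure lebesgue (cube q z) = (1/q) ^ CARD('n)" .
qed

lemma cubes_meas:
  fixes Z :: "(int^'n) set"
  assumes "q > 0" "finite Z"
  shows "(\<Union>z\<in>Z. cube q z) \<in> lmeasurable"
    "measure lebesgue (\<Union>z\<in>Z. cube q z) = real (card Z) * (1/q) ^ CARD('n)"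
proof -
  show "(\<Union>z\<in>Z. cube q z) \<in> lmeasurable"
    using assms(2) by (induction Z rule: finite_induct) (auto intro: cube_meas[OF assms(1)] fmeasurable.Un)
  have "measure lebesgue (\<Union>z\<in>Z. cube q z) = (\<Sum>z\<in>Z. measure lebesgue (cube q z))"
  proof (rule measure_finite_Union[OF assms(2)])
    show "disjoint_family_on (cube q) Z" unfolding disjoint_family_on_def using cube_disj[OF assms(1)] by blast
    show "cube q ` Z \<subseteq> sets lebesgue" using cube_meas(1)[OF assms(1)] by (auto simp: fmeasurable_def)
    show "emeasure lebesgue (cube q z) \<noteq> \<infinity>" for z using cube_meas(1)[OF assms(1), of z] by (auto simp: fmeasurable_def)
  qed
  also have "\<dots> = (\<Sum>z\<in>Z. (1/q) ^ CARD('n))"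
    by (rule sum.cong[OF refl]) (rule cube_meas(2)[OF assms(1)])
  also have "\<dots> = real (card Z) * (1/q) ^ CARD('n)" by simp
  finally show "measure lebesgue (\<Union>z\<in>Z. cube q z) = real (card Z) * (1/q) ^ CARD('n)" .
qed



context setting begin

definition Hs :: "real \<Rightarrow> (real^'n) set" where "Hs \<beta> = {u. inner u b < \<beta>}"

lemma Hs_open: "open (Hs \<beta>)"
  using open_halfspace_lt[of b \<beta>] by (simp add: Hs_def inner_commute)

lemma pe_pos: "real (p^e) > 0" using p2 by simp

lemma pe_large: "eventually (\<lambda>e. K \<le> real (p^e)) sequentially"
proof -
  have "K \<le> real (p^e)" if "nat \<lceil>K\<rceil> \<le> e" for e
  proof -
    have "e < 2^e" by (rule less_exp)
    also have "(2::nat)^e \<le> p^e" using p2 by (rule power_mono) simp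
    finally have "real e \<le> real (p^e)" by simp
    moreover have "K \<le> real e" using that by linarith
    ultimately show ?thesis by linarith
  qed
  then show ?thesis by (rule eventually_sequentiallyI)
qed

definition Fe :: "nat \<Rightarrow> real \<Rightarrow> (int^'n) set" where
  "Fe e \<beta> = {t \<in> T (p ^ e). rvec t \<in> (\<lambda>u. real (p ^ e) *\<^sub>R u) ` Hs \<beta>}"

lemma Fe_iff: "t \<in> Fe e \<beta> \<longleftrightarrow> t \<in> T (p^e) \<and> (1 / real (p^e)) *\<^sub>R rvec t \<in> Hs \<beta>"
proof -
  have q: "real (p^e) \<noteq> 0" using pe_pos[of e] by simp
  have p0: "p \<noteq> 0" using p2 by simp
  have "rvec t \<in> (\<lambda>u. real (p ^ e) *\<^sub>R u) ` Hs \<beta> \<longleftrightarrow> (1 / real (p^e)) *\<^sub>R rvec t \<in> Hs \<beta>"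
  proof
    assume "rvec t \<in> (\<lambda>u. real (p ^ e) *\<^sub>R u) ` Hs \<beta>"
    then obtain u where "u \<in> Hs \<beta>" "rvec t = real (p ^ e) *\<^sub>R u" by blast
    then show "(1 / real (p^e)) *\<^sub>R rvec t \<in> Hs \<beta>" using q p0 by simp
  next
    assume "(1 / real (p^e)) *\<^sub>R rvec t \<in> Hs \<beta>"
    moreover have "rvec t = real (p ^ e) *\<^sub>R ((1 / real (p^e)) *\<^sub>R rvec t)" using q p0 by simp
    ultimately show "rvec t \<in> (\<lambda>u. real (p ^ e) *\<^sub>R u) ` Hs \<beta>" by blast
  qed
  then show ?thesis by (simp add: Fe_def)
qed

lemma Fe_finite: "finite (Fe e \<beta>)"
proof -
  obtain R where R: "\<And>u. u \<in> CC \<Longrightarrow> inner u b \<le> \<beta> \<Longrightarrow> norm u \<le> R" using CC_bound by blast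
  have "Fe e \<beta> \<subseteq> {z. norm (rvec z) \<le> real (p^e) * R}"
  proof
    fix t assume "t \<in> Fe e \<beta>"
    then have t: "t \<in> T (p^e)" "(1 / real (p^e)) *\<^sub>R rvec t \<in> Hs \<beta>" by (auto simp: Fe_iff)
    have a: "(1 / real (p^e)) *\<^sub>R rvec t \<in> CC" using Dl_point_CC t(1) .
    have "inner ((1 / real (p^e)) *\<^sub>R rvec t) b \<le> \<beta>"
      using t(2) less_imp_le unfolding Hs_def by blast
    then have "norm ((1 / real (p^e)) *\<^sub>R rvec t) \<le> R" using R a by blast
    then show "t \<in> {z. norm (rvec z) \<le> real (p^e) * R}" using pe_pos[of e]
      by (simp add: divide_le_eq mult.commute)
  qed
  then show ?thesis using finite_lattice_ball finite_subset by blast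
qed

lemma v_exists: "\<exists>v\<in>S. \<forall>y. (\<forall>i. 0 \<le> y$i \<and> y$i \<le> 1) \<longrightarrow> rvec v + y \<in> CF"
proof -
  have ex: "\<exists>ab. fst ab \<in> S \<and> snd ab \<in> S \<and> axis i 1 = fst ab - snd ab" for i
  proof -
    have "axis i 1 \<in> {x - y | x y. x \<in> S \<and> y \<in> S}" using gp by simp
    then obtain x y where "x \<in> S" "y \<in> S" "axis i 1 = x - y" by blast
    then show ?thesis by (intro exI[of _ "(x,y)"]) simp
  qed
  define ab where "ab i = (SOME ab. fst ab \<in> S \<and> snd ab \<in> S \<and> axis i 1 = fst ab - snd ab)" for i
  have ab: "fst (ab i) \<in> S \<and> snd (ab i) \<in> S \<and> axis i 1 = fst (ab i) - snd (ab i)" for i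
    unfolding ab_def by (rule someI_ex[OF ex])
  define X where "X i = fst (ab i)" for i
  define Y where "Y i = snd (ab i)" for i
  have XY: "X i \<in> S" "Y i \<in> S" "axis i 1 = X i - Y i" for i using ab[of i] by (auto simp: X_def Y_def)
  have key: "real_of_int (X i $ j) - real_of_int (Y i $ j) = (if j = i then 1 else 0)" for i j
  proof -
    have "(X i - Y i) $ j = axis i (1::int) $ j" using XY(3)[of i] by simp
    then have h: "X i $ j - Y i $ j = (if j = i then 1 else 0)" by (simp add: axis_def)
    have "real_of_int (X i $ j) - real_of_int (Y i $ j) = real_of_int (X i $ j - Y i $ j)" by simp
    also have "\<dots> = (if j = i then 1 else 0)" unfolding h by simp
    finally show ?thesis .
  qed
  define v where "v = (\<Sum>i\<in>UNIV. X i + Y i)"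
  have vS: "v \<in> S" unfolding v_def using XY sg by (intro sg_sum) (auto simp: is_semigroup_def)
  have "rvec v + y \<in> CF" if y: "\<forall>i. 0 \<le> y$i \<and> y$i \<le> 1" for y
  proof -
    have eq: "rvec v + y = (\<Sum>i\<in>UNIV. (1 + y$i) *\<^sub>R rvec (X i) + (1 - y$i) *\<^sub>R rvec (Y i))"
    proof (subst vec_eq_iff, intro allI)
      fix j
      have "(\<Sum>i\<in>UNIV. (1 + y$i) *\<^sub>R rvec (X i) + (1 - y$i) *\<^sub>R rvec (Y i)) $ j
          = (\<Sum>i\<in>UNIV. (real_of_int (X i $ j) + real_of_int (Y i $ j)) + y$i * (real_of_int (X i $ j) - real_of_int (Y i $ j)))"
        by (simp add: rvec_nth algebra_simps)
      also have "\<dots> = (\<Sum>i\<in>UNIV. real_of_int (X i $ j) + real_of_int (Y i $ j)) + (\<Sum>i\<in>UNIV. y$i * (if j = i then 1 else 0))"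
        by (simp only: key sum.distrib)
      also have "(\<Sum>i\<in>UNIV. y$i * (if j = i then 1 else 0)) = y$j"
        by (simp add: if_distrib sum.delta cong: if_cong)
      also have "(\<Sum>i\<in>UNIV. real_of_int (X i $ j) + real_of_int (Y i $ j)) + y$j = (rvec v + y) $ j"
        by (simp add: v_def rvec_sum rvec_add rvec_nth)
      finally show "(rvec v + y) $ j = (\<Sum>i\<in>UNIV. (1 + y$i) *\<^sub>R rvec (X i) + (1 - y$i) *\<^sub>R rvec (Y i)) $ j" by simp
    qed
    show ?thesis unfolding eq CF_def
      using y XY by (intro cf_sum cf_add cf_scale cf_base) auto
  qed
  then show ?thesis using vS by blast
qed

definition vv where "vv = (SOME v. v \<in> S \<and> (\<forall>y. (\<forall>i. 0 \<le> y$i \<and> y$i \<le> 1) \<longrightarrow> rvec v + y \<in> CF))"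
lemma vv: "vv \<in> S" "\<And>y. (\<forall>i. 0 \<le> y$i \<and> y$i \<le> 1) \<Longrightarrow> rvec vv + y \<in> CF"
  using someI_ex[OF v_exists[unfolded Bex_def]] unfolding vv_def by blast+

definition "MM = (norm (rvec vv) + real CARD('n)) * norm b"
lemma MM_nonneg: "MM \<ge> 0" by (simp add: MM_def)

lemma body_H_lmeas: "p_body p S T \<inter> Hs \<beta> \<in> lmeasurable"
proof (rule bounded_set_imp_lmeasurable)
  show "bounded (p_body p S T \<inter> Hs \<beta>)"
    by (rule bounded_subset[OF body_bounded[of \<beta>]]) (auto simp: Hs_def)
  show "p_body p S T \<inter> Hs \<beta> \<in> sets lebesgue"
    by (intro sets.Int body_sets open_lebesgue Hs_open)
qed

lemma upper:
  "real (card (Fe e \<alpha>)) / real (p^e) ^ CARD('n) \<le> measure lebesgue (p_body p S T \<inter> Hs (\<alpha> + MM / real (p^e)))"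
proof -
  define q where "q = real (p^e)"
  have q: "q > 0" unfolding q_def by (rule pe_pos)
  define Z where "Z = (\<lambda>t. t + vv) ` Fe e \<alpha>"
  have finZ: "finite Z" unfolding Z_def using Fe_finite by simp
  have cardZ: "card Z = card (Fe e \<alpha>)" unfolding Z_def by (rule card_image) (simp add: inj_on_def)
  have sub: "(\<Union>z\<in>Z. cube q z) \<subseteq> p_body p S T \<inter> Hs (\<alpha> + MM / q)"
  proof
    fix x assume "x \<in> (\<Union>z\<in>Z. cube q z)"
    then obtain t where t: "t \<in> Fe e \<alpha>" "x \<in> cube q (t + vv)" unfolding Z_def by blast
    then have tT: "t \<in> T (p^e)" and tH: "(1/q) *\<^sub>R rvec t \<in> Hs \<alpha>" by (auto simp: Fe_iff q_def)
    obtain y where y: "\<forall>i. 0 \<le> y$i \<and> y$i \<le> 1" "x = (1/q) *\<^sub>R (rvec (t + vv) + y)"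
      using cube_param[OF q t(2)] by blast
    define c where "c = (1/q) *\<^sub>R (rvec vv + y)"
    have c: "c \<in> CC" unfolding c_def using vv(2)[OF y(1)] q CF_scale CF_CC by auto
    have xe: "x = (1/q) *\<^sub>R rvec t + c" unfolding y(2) c_def rvec_add by (simp add: algebra_simps)
    have "x \<in> Dl e" unfolding Dl_def q_def[symmetric] using tT c xe by blast
    then have xb: "x \<in> p_body p S T" unfolding body_eq by blast
    have "norm y \<le> (\<Sum>i\<in>UNIV. \<bar>y$i\<bar>)" by (rule norm_le_l1_cart)
    also have "\<dots> \<le> (\<Sum>i\<in>(UNIV::'n set). 1)" using y(1) by (intro sum_mono) auto
    finally have ny: "norm y \<le> real CARD('n)" by simp
    have "inner (rvec vv + y) b \<le> norm (rvec vv + y) * norm b" by (rule norm_cauchy_schwarz)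
    also have "\<dots> \<le> (norm (rvec vv) + norm y) * norm b" by (intro mult_right_mono norm_triangle_ineq) simp
    also have "\<dots> \<le> MM" unfolding MM_def using ny by (intro mult_right_mono) auto
    finally have i1: "inner (rvec vv + y) b \<le> MM" .
    have "inner x b = inner ((1/q) *\<^sub>R rvec t) b + (1/q) * inner (rvec vv + y) b"
      unfolding xe c_def by (simp add: inner_add_left)
    also have "\<dots> < \<alpha> + MM / q"
    proof -
      have "(1/q) * inner (rvec vv + y) b \<le> MM / q" using i1 q by (simp add: divide_right_mono)
      then show ?thesis using tH by (simp add: Hs_def)
    qed
    finally show "x \<in> p_body p S T \<inter> Hs (\<alpha> + MM / q)" using xb by (simp add: Hs_def)
  qed
  have "real (card (Fe e \<alpha>)) / q ^ CARD('n) = measure lebesgue (\<Union>z\<in>Z. cube q z)"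
    using cubes_meas(2)[OF q finZ] cardZ by (simp add: power_one_over divide_inverse power_inverse)
  also have "\<dots> \<le> measure lebesgue (p_body p S T \<inter> Hs (\<alpha> + MM / q))"
    by (rule measure_mono_fmeasurable[OF sub]) (use cubes_meas(1)[OF q finZ] body_H_lmeas in auto)
  finally show ?thesis unfolding q_def .
qed

end


context setting begin

lemma Hs_mono: "\<beta> \<le> \<gamma> \<Longrightarrow> Hs \<beta> \<subseteq> Hs \<gamma>" by (auto simp: Hs_def)

lemma upper_ev:
  assumes "\<epsilon> > 0"
  shows "eventually (\<lambda>e. real (card (Fe e \<alpha>)) / real (p^e) ^ CARD('n)
           \<le> measure lebesgue (p_body p S T \<inter> Hs \<alpha>) + \<epsilon>) sequentially"
proof -
  define V where "V = measure lebesgue (p_body p S T \<inter> Hs \<alpha>)"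
  define A where "A n = p_body p S T \<inter> Hs (\<alpha> + 1 / real (Suc n))" for n
  have Am: "A n \<in> lmeasurable" for n unfolding A_def by (rule body_H_lmeas)
  have dec: "decseq A" unfolding decseq_Suc_iff A_def
    by (intro allI Int_mono order_refl Hs_mono) (simp add: frac_le)
  have inter: "(\<Inter>n. A n) = p_body p S T \<inter> {u. inner u b \<le> \<alpha>}"
  proof (intro equalityI subsetI)
    fix x assume x: "x \<in> (\<Inter>n. A n)"
    have "inner x b \<le> \<alpha>"
    proof (rule ccontr)
      assume "\<not> inner x b \<le> \<alpha>"
      then obtain n where n: "inverse (real (Suc n)) < inner x b - \<alpha>"
        using reals_Archimedean[of "inner x b - \<alpha>"] by auto
      have "x \<in> A n" using x by blast
      then have "inner x b < \<alpha> + 1 / real (Suc n)" by (simp add: A_def Hs_def)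
      then show False using n by (simp add: inverse_eq_divide)
    qed
    then show "x \<in> p_body p S T \<inter> {u. inner u b \<le> \<alpha>}" using x by (auto simp: A_def)
  next
    fix x assume "x \<in> p_body p S T \<inter> {u. inner u b \<le> \<alpha>}"
    then have x: "x \<in> p_body p S T" "inner x b \<le> \<alpha>" by auto
    have "x \<in> A n" for n
    proof -
      have "0 < 1 / real (Suc n)" by simp
      then have "inner x b < \<alpha> + 1 / real (Suc n)" using x(2) by linarith
      then show ?thesis using x(1) by (simp add: A_def Hs_def)
    qed
    then show "x \<in> (\<Inter>n. A n)" by blast
  qed
  have lim: "(\<lambda>n. measure lebesgue (A n)) \<longlonglongrightarrow> measure lebesgue (\<Inter>n. A n)"
  proof (rule Lim_measure_decseq)
    show "range A \<subseteq> sets lebesgue" using Am fmeasurableD by blast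
    show "decseq A" by (rule dec)
    show "emeasure lebesgue (A i) \<noteq> \<infinity>" for i
      using fmeasurableD2[OF Am[of i]] by simp
  qed
  have "measure lebesgue (p_body p S T \<inter> {u. inner u b \<le> \<alpha>}) = V"
    unfolding V_def
  proof (rule measure_negligible_symdiff[OF body_H_lmeas])
    have "negligible {u. inner b u = \<alpha>}" using b_nz by (intro negligible_hyperplane) simp
    then show "negligible (p_body p S T \<inter> Hs \<alpha> - p_body p S T \<inter> {u. inner u b \<le> \<alpha>} \<union>
        (p_body p S T \<inter> {u. inner u b \<le> \<alpha>} - p_body p S T \<inter> Hs \<alpha>))"
      by (rule negligible_subset) (auto simp: Hs_def inner_commute)
  qed
  with lim inter have lim2: "(\<lambda>n. measure lebesgue (A n)) \<longlonglongrightarrow> V" by simp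
  have "eventually (\<lambda>n. measure lebesgue (A n) < V + \<epsilon>) sequentially"
    using order_tendstoD(2)[OF lim2] assms by simp
  then obtain n where n: "measure lebesgue (A n) < V + \<epsilon>"
    unfolding eventually_sequentially by blast
  have "eventually (\<lambda>e. MM * real (Suc n) \<le> real (p^e)) sequentially" by (rule pe_large)
  then show ?thesis
  proof (rule eventually_mono)
    fix e assume e: "MM * real (Suc n) \<le> real (p^e)"
    have q: "real (p^e) > 0" by (rule pe_pos)
    have "MM / real (p^e) \<le> 1 / real (Suc n)"
    proof -
      have "MM \<le> real (p^e) / real (Suc n)" using e by (simp add: le_divide_eq)
      then have "MM / real (p^e) \<le> (real (p^e) / real (Suc n)) / real (p^e)"
        using q by (rule divide_right_mono[OF _ less_imp_le])
      also have "\<dots> = 1 / real (Suc n)" using q by simp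
      finally show ?thesis .
    qed
    then have "p_body p S T \<inter> Hs (\<alpha> + MM / real (p^e)) \<subseteq> A n"
      unfolding A_def by (intro Int_mono order_refl Hs_mono) simp
    then have "measure lebesgue (p_body p S T \<inter> Hs (\<alpha> + MM / real (p^e))) \<le> measure lebesgue (A n)"
      by (rule measure_mono_fmeasurable) (use body_H_lmeas Am in auto)
    then show "real (card (Fe e \<alpha>)) / real (p^e) ^ CARD('n) \<le> measure lebesgue (p_body p S T \<inter> Hs \<alpha>) + \<epsilon>"
      using upper[of e \<alpha>] n unfolding V_def by linarith
  qed
qed

end


context setting begin

definition sE :: "nat \<Rightarrow> int^'n" where "sE = from_nat_into S"
definition GG :: "nat \<Rightarrow> (int^'n) set" where "GG n = sE ` {..n}"
definition KG :: "nat \<Rightarrow> (real^'n) set" where "KG n = cf (rvec ` GG n)"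

lemma S_ne: "S \<noteq> {}" using sg by (auto simp: is_semigroup_def)
lemma GG_fin: "finite (GG n)" by (simp add: GG_def)
lemma GG_S: "GG n \<subseteq> S" using from_nat_into[OF S_ne] by (auto simp: GG_def sE_def)
lemma GG_mono: "m \<le> n \<Longrightarrow> GG m \<subseteq> GG n" by (auto simp: GG_def)
lemma KG_mono: "m \<le> n \<Longrightarrow> KG m \<subseteq> KG n" unfolding KG_def by (intro cf_mono image_mono GG_mono)
lemma KG_CF: "KG n \<subseteq> CF" unfolding KG_def CF_def by (intro cf_mono image_mono GG_S)
lemma convex_KG: "convex (KG n)" unfolding KG_def by (rule convex_cf)
lemma KG_scale: "u \<in> KG n \<Longrightarrow> a \<ge> 0 \<Longrightarrow> a *\<^sub>R u \<in> KG n" unfolding KG_def by (rule cf_scale)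

lemma CF_cover: assumes "c \<in> CF" shows "\<exists>n. c \<in> KG n"
proof -
  obtain F cc where F: "finite F" "F \<subseteq> rvec ` S" "\<forall>u\<in>F. cc u \<ge> 0" "c = (\<Sum>u\<in>F. cc u *\<^sub>R u)"
    using assms unfolding CF_def cf_def by blast
  have rng: "range sE = S" unfolding sE_def using S_ne by simp
  have "\<forall>u\<in>F. \<exists>m. u = rvec (sE m)"
  proof
    fix u assume "u \<in> F"
    then obtain s where "s \<in> S" "u = rvec s" using F(2) by blast
    then show "\<exists>m. u = rvec (sE m)" using rng by (metis rangeE)
  qed
  then obtain m where m: "\<forall>u\<in>F. u = rvec (sE (m u))" by metis
  define n where "n = Max (insert 0 (m ` F))"
  have "F \<subseteq> rvec ` GG n"
  proof
    fix u assume u: "u \<in> F"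
    have "m u \<le> n" unfolding n_def using F(1) u by (intro Max_ge) auto
    then show "u \<in> rvec ` GG n" using m u unfolding GG_def by auto
  qed
  then have "c \<in> KG n" unfolding KG_def cf_def using F by blast
  then show ?thesis by blast
qed

definition ap :: "nat \<Rightarrow> int^'n \<Rightarrow> real^'n" where "ap e0 t = (1 / real (p^e0)) *\<^sub>R rvec t"

definition K :: "real \<Rightarrow> nat \<Rightarrow> nat \<Rightarrow> (real^'n) set" where
  "K \<alpha> e0 n = {x \<in> Hs \<alpha>. \<exists>t\<in>T(p^e0). x - ap e0 t \<in> interior (KG n)}"

lemma K_eq: "K \<alpha> e0 n = Hs \<alpha> \<inter> (\<Union>t\<in>T(p^e0). (\<lambda>x. ap e0 t + x) ` interior (KG n))"
proof (intro set_eqI iffI)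
  fix x assume "x \<in> K \<alpha> e0 n"
  then obtain t where t: "x \<in> Hs \<alpha>" "t \<in> T(p^e0)" "x - ap e0 t \<in> interior (KG n)" unfolding K_def by blast
  have "x = ap e0 t + (x - ap e0 t)" by simp
  then show "x \<in> Hs \<alpha> \<inter> (\<Union>t\<in>T(p^e0). (\<lambda>x. ap e0 t + x) ` interior (KG n))" using t by blast
next
  fix x assume "x \<in> Hs \<alpha> \<inter> (\<Union>t\<in>T(p^e0). (\<lambda>x. ap e0 t + x) ` interior (KG n))"
  then obtain t y where "x \<in> Hs \<alpha>" "t \<in> T(p^e0)" "y \<in> interior (KG n)" "x = ap e0 t + y" by blast
  then show "x \<in> K \<alpha> e0 n" unfolding K_def by (intro CollectI conjI bexI[of _ t]) auto
qed

lemma K_open: "open (K \<alpha> e0 n)"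
  unfolding K_eq by (intro open_Int Hs_open open_UN ballI open_translation open_interior)

lemma K_sub: "K \<alpha> e0 n \<subseteq> p_body p S T \<inter> Hs \<alpha>"
proof
  fix x assume "x \<in> K \<alpha> e0 n"
  then obtain t where t: "x \<in> Hs \<alpha>" "t \<in> T(p^e0)" "x - ap e0 t \<in> interior (KG n)" unfolding K_def by blast
  have "x - ap e0 t \<in> CC" using t(3) interior_subset KG_CF CF_CC by blast
  then have "x \<in> Dl e0" unfolding Dl_def using t(2) unfolding ap_def
    by (intro CollectI exI[of _ t] exI[of _ "x - ap e0 t"]) (simp add: ap_def)
  then show "x \<in> p_body p S T \<inter> Hs \<alpha>" using t(1) unfolding body_eq by blast
qed

lemma bH_bounded: "bounded (p_body p S T \<inter> Hs \<alpha>)"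
  by (rule bounded_subset[OF body_bounded[of \<alpha>]]) (auto simp: Hs_def)

lemma K_lmeas: "K \<alpha> e0 n \<in> lmeasurable"
  by (intro bounded_set_imp_lmeasurable open_lebesgue K_open bounded_subset[OF bH_bounded K_sub])

lemma K_inc: "incseq (K \<alpha> e0)"
  unfolding incseq_def K_def using interior_mono[OF KG_mono] by blast

lemma UK_lmeas: "(\<Union>n. K \<alpha> e0 n) \<in> lmeasurable"
  by (rule fmeasurable_UN[where A="p_body p S T \<inter> Hs \<alpha>"]) (use K_sub K_lmeas body_H_lmeas in auto)

lemma K_lim: "(\<lambda>n. measure lebesgue (K \<alpha> e0 n)) \<longlonglongrightarrow> measure lebesgue (\<Union>n. K \<alpha> e0 n)"
proof (rule Lim_measure_incseq)
  show "range (K \<alpha> e0) \<subseteq> sets lebesgue" using K_lmeas fmeasurableD by blast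
  show "incseq (K \<alpha> e0)" by (rule K_inc)
  show "emeasure lebesgue (\<Union>n. K \<alpha> e0 n) \<noteq> \<infinity>" using fmeasurableD2[OF UK_lmeas] by simp
qed

definition NN :: "nat \<Rightarrow> (real^'n) set" where
  "NN e0 = \<Union>(range (\<lambda>(t,m). (+) (ap e0 t) ` frontier (KG m))) \<union> \<Union>(range (\<lambda>t. (+) (ap e0 t) ` frontier CF))"

lemma NN_neg: "negligible (NN e0)"
  unfolding NN_def
proof (intro negligible_Un negligible_countable_Union)
  show "countable (range (\<lambda>(t,m). (+) (ap e0 t) ` frontier (KG m)))" by (intro countable_image) simp
  show "countable (range (\<lambda>t. (+) (ap e0 t) ` frontier CF))" by (intro countable_image) simp
  show "negligible X" if "X \<in> range (\<lambda>(t,m). (+) (ap e0 t) ` frontier (KG m))" for X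
    using that by (auto intro!: negligible_translation negligible_convex_frontier convex_KG)
  show "negligible X" if "X \<in> range (\<lambda>t. (+) (ap e0 t) ` frontier CF)" for X
    using that by (auto intro!: negligible_translation negligible_convex_frontier convex_CF)
qed

lemma Dl_cover: "Dl e0 \<inter> Hs \<alpha> \<subseteq> (\<Union>n. K \<alpha> e0 n) \<union> NN e0"
proof
  fix x assume x: "x \<in> Dl e0 \<inter> Hs \<alpha>"
  then obtain t c where tc: "t \<in> T (p^e0)" "c \<in> CC" "x = ap e0 t + c"
    unfolding Dl_def ap_def by blast
  have xc: "x - ap e0 t = c" using tc(3) by simp
  show "x \<in> (\<Union>n. K \<alpha> e0 n) \<union> NN e0"
  proof (cases "c \<in> CF")
    case True
    then obtain m where m: "c \<in> KG m" using CF_cover by blast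
    show ?thesis
    proof (cases "c \<in> interior (KG m)")
      case True
      then have "x \<in> K \<alpha> e0 m" unfolding K_def using x tc(1) xc by auto
      then show ?thesis by blast
    next
      case False
      then have "c \<in> frontier (KG m)" using m closure_subset unfolding frontier_def by blast
      then have "x \<in> (+) (ap e0 t) ` frontier (KG m)" using tc(3) by blast
      then show ?thesis unfolding NN_def by blast
    qed
  next
    case False
    then have "c \<in> frontier CF" using tc(2) interior_subset unfolding frontier_def CC_eq by blast
    then have "x \<in> (+) (ap e0 t) ` frontier CF" using tc(3) by blast
    then show ?thesis unfolding NN_def by blast
  qed
qed

lemma Dl_le_UK: "measure lebesgue (Dl e0 \<inter> Hs \<alpha>) \<le> measure lebesgue (\<Union>n. K \<alpha> e0 n)"
proof -
  define U where "U = (\<Union>n. K \<alpha> e0 n)"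
  define X where "X = Dl e0 \<inter> Hs \<alpha>"
  have Xs: "X \<in> sets lebesgue" unfolding X_def by (intro sets.Int Dl_sets open_lebesgue Hs_open)
  have XB: "X \<subseteq> p_body p S T \<inter> Hs \<alpha>" unfolding X_def body_eq by blast
  have UB: "U \<subseteq> p_body p S T \<inter> Hs \<alpha>" unfolding U_def using K_sub by blast
  have Um: "U \<in> lmeasurable" unfolding U_def by (rule UK_lmeas)
  have XUm: "X \<union> U \<in> lmeasurable"
    by (intro bounded_set_imp_lmeasurable sets.Un Xs fmeasurableD[OF Um] bounded_subset[OF bH_bounded])
       (use XB UB in auto)
  have "measure lebesgue (X \<union> U) = measure lebesgue U"
  proof (rule measure_negligible_symdiff[OF Um])
    show "negligible (U - (X \<union> U) \<union> (X \<union> U - U))"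
      by (rule negligible_subset[OF NN_neg[of e0]]) (use Dl_cover in \<open>auto simp: X_def U_def\<close>)
  qed
  moreover have "measure lebesgue X \<le> measure lebesgue (X \<union> U)"
    by (rule measure_mono_fmeasurable[OF _ Xs XUm]) auto
  ultimately show ?thesis unfolding X_def U_def by simp
qed

end


context setting begin

definition ww :: "nat \<Rightarrow> int^'n" where
  "ww n = (SOME w. w \<in> S \<and> (\<forall>z. rvec z \<in> KG n \<longrightarrow> w + z \<in> S))"

lemma ww: "ww n \<in> S" "rvec z \<in> KG n \<Longrightarrow> ww n + z \<in> S"
proof -
  have "\<exists>w\<in>S. \<forall>z. rvec z \<in> cf (rvec ` GG n) \<longrightarrow> w + z \<in> S"
    by (rule saturation[OF sg gp GG_fin GG_S])
  then have "\<exists>w. w \<in> S \<and> (\<forall>z. rvec z \<in> KG n \<longrightarrow> w + z \<in> S)" unfolding KG_def by blast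
  from someI_ex[OF this] show "ww n \<in> S" "rvec z \<in> KG n \<Longrightarrow> ww n + z \<in> S"
    unfolding ww_def by blast+
qed

definition Good :: "real \<Rightarrow> nat \<Rightarrow> nat \<Rightarrow> nat \<Rightarrow> (real^'n) set" where
  "Good \<alpha> e0 n e = {x \<in> Hs \<alpha>. \<exists>t\<in>T(p^e0).
     real (p^e) *\<^sub>R x - real (p^(e-e0)) *\<^sub>R rvec t - rvec (ww n) \<in> KG n}"

definition Ze :: "real \<Rightarrow> nat \<Rightarrow> nat \<Rightarrow> nat \<Rightarrow> (int^'n) set" where
  "Ze \<alpha> e0 n e = {z. cube (real (p^e)) z \<subseteq> Good \<alpha> e0 n e}"

definition UU :: "real \<Rightarrow> nat \<Rightarrow> nat \<Rightarrow> nat \<Rightarrow> (real^'n) set" where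
  "UU \<alpha> e0 n e = (\<Union>z\<in>Ze \<alpha> e0 n e. cube (real (p^e)) z)"

lemma Ze_sub: assumes "e0 \<le> e" shows "Ze \<alpha> e0 n e \<subseteq> Fe e \<alpha>"
proof
  fix z assume "z \<in> Ze \<alpha> e0 n e"
  define q where "q = real (p^e)"
  have q: "q > 0" unfolding q_def by (rule pe_pos)
  have "(1/q) *\<^sub>R rvec z \<in> Good \<alpha> e0 n e"
    using \<open>z \<in> Ze \<alpha> e0 n e\<close> cube_corner[OF q, of z] unfolding Ze_def q_def by blast
  then obtain t where zH: "(1/q) *\<^sub>R rvec z \<in> Hs \<alpha>" and t: "t \<in> T(p^e0)"
    and inK: "q *\<^sub>R ((1/q) *\<^sub>R rvec z) - real (p^(e-e0)) *\<^sub>R rvec t - rvec (ww n) \<in> KG n"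
    unfolding Good_def q_def by blast
  define k where "k = e - e0"
  have ek: "e = e0 + k" unfolding k_def using assms by simp
  define z' where "z' = z - int_scale (int (p^k)) t - ww n"
  have "rvec z' = rvec z - real (p^k) *\<^sub>R rvec t - rvec (ww n)"
    unfolding z'_def rvec_diff rvec_int_scale by simp
  also have "\<dots> = q *\<^sub>R ((1/q) *\<^sub>R rvec z) - real (p^(e-e0)) *\<^sub>R rvec t - rvec (ww n)"
    using q by (simp add: k_def)
  finally have "rvec z' \<in> KG n" using inK by simp
  then have wz: "ww n + z' \<in> S" by (rule ww(2))
  have "int_scale (int (p^k)) t \<in> T (p^e)" using T_scale[OF t, of k] ek by simp
  then have "(ww n + z') + int_scale (int (p^k)) t \<in> T (p^e)" using wz by (rule T_ideal[rotated])
  moreover have "(ww n + z') + int_scale (int (p^k)) t = z" unfolding z'_def by simp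
  ultimately have "z \<in> T (p^e)" by simp
  then show "z \<in> Fe e \<alpha>" using zH unfolding Fe_iff q_def by simp
qed

lemma UU_meas: assumes "e0 \<le> e"
  shows "UU \<alpha> e0 n e \<in> lmeasurable"
    "measure lebesgue (UU \<alpha> e0 n e) \<le> real (card (Fe e \<alpha>)) / real (p^e) ^ CARD('n)"
proof -
  have q: "real (p^e) > 0" by (rule pe_pos)
  have fin: "finite (Ze \<alpha> e0 n e)" using Ze_sub[OF assms] Fe_finite finite_subset by blast
  show "UU \<alpha> e0 n e \<in> lmeasurable" unfolding UU_def by (rule cubes_meas(1)[OF q fin])
  have "measure lebesgue (UU \<alpha> e0 n e) = real (card (Ze \<alpha> e0 n e)) * (1 / real (p^e)) ^ CARD('n)"
    unfolding UU_def by (rule cubes_meas(2)[OF q fin])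
  also have "\<dots> \<le> real (card (Fe e \<alpha>)) * (1 / real (p^e)) ^ CARD('n)"
    using card_mono[OF Fe_finite Ze_sub[OF assms]] by (intro mult_right_mono) auto
  also have "\<dots> = real (card (Fe e \<alpha>)) / real (p^e) ^ CARD('n)" by (simp add: power_one_over)
  finally show "measure lebesgue (UU \<alpha> e0 n e) \<le> real (card (Fe e \<alpha>)) / real (p^e) ^ CARD('n)" .
qed

lemma pointwise: assumes "x \<in> K \<alpha> e0 n" shows "eventually (\<lambda>e. x \<in> UU \<alpha> e0 n e) sequentially"
proof -
  obtain t where xH: "x \<in> Hs \<alpha>" and t: "t \<in> T(p^e0)" and xi: "x - ap e0 t \<in> interior (KG n)"
    using assms unfolding K_def by blast
  obtain r1 where r1: "r1 > 0" "ball (x - ap e0 t) r1 \<subseteq> KG n" using xi mem_interior by blast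
  obtain r2 where r2: "r2 > 0" "ball x r2 \<subseteq> Hs \<alpha>" using xH Hs_open open_contains_ball by blast
  define \<rho> where "\<rho> = min r1 r2"
  have rho: "\<rho> > 0" unfolding \<rho>_def using r1 r2 by simp
  define L where "L = real CARD('n) + norm (rvec (ww n))"
  have L0: "L \<ge> 0" unfolding L_def by simp
  have ev: "eventually (\<lambda>e. e0 \<le> e \<and> L / \<rho> + 1 \<le> real (p^e)) sequentially"
    by (intro eventually_conj eventually_ge_at_top pe_large)
  show ?thesis
  proof (rule eventually_mono[OF ev])
    fix e assume e: "e0 \<le> e \<and> L / \<rho> + 1 \<le> real (p^e)"
    define q where "q = real (p^e)"
    have q: "q > 0" unfolding q_def by (rule pe_pos)
    have Lq: "L / q < \<rho>"
    proof -
      have "L / \<rho> < q" using e unfolding q_def by linarith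
      then have "L < \<rho> * q" using rho by (simp add: divide_less_eq mult.commute)
      then show ?thesis using q by (simp add: divide_less_eq mult.commute)
    qed
    define z where "z = (\<chi> i. \<lfloor>q * x$i\<rfloor>)"
    have xz: "x \<in> cube q z" unfolding z_def by (rule cube_floor[OF q])
    have "cube q z \<subseteq> Good \<alpha> e0 n e"
    proof
      fix x' assume x': "x' \<in> cube q z"
      have d: "norm (x' - x) \<le> real CARD('n) / q" by (rule cube_diam[OF q x' xz])
      have d2: "real CARD('n) / q \<le> L / q" unfolding L_def using q by (simp add: divide_right_mono)
      have "dist x x' < r2" using d d2 Lq unfolding \<rho>_def by (simp add: dist_norm norm_minus_commute)
      then have x'H: "x' \<in> Hs \<alpha>" using r2(2) by auto
      define c' where "c' = x' - ap e0 t - (1/q) *\<^sub>R rvec (ww n)"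
      have "norm ((x - ap e0 t) - c') = norm ((x - x') + (1/q) *\<^sub>R rvec (ww n))"
        unfolding c'_def by (simp add: algebra_simps)
      also have "\<dots> \<le> norm (x - x') + norm (rvec (ww n)) / q"
        using norm_triangle_ineq[of "x - x'" "(1/q) *\<^sub>R rvec (ww n)"] q by simp
      also have "\<dots> \<le> L / q"
        using d q unfolding L_def by (simp add: norm_minus_commute add_divide_distrib)
      finally have "dist (x - ap e0 t) c' < r1" using Lq unfolding \<rho>_def by (simp add: dist_norm)
      then have "c' \<in> KG n" using r1(2) by auto
      then have qc: "q *\<^sub>R c' \<in> KG n" using q by (intro KG_scale) auto
      have pp: "real (p^e) = real (p^e0) * real (p^(e-e0))"
        using e by (simp add: power_add[symmetric])
      have r: "q / real (p^e0) = real (p^(e-e0))"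
        unfolding q_def pp using pe_pos[of e0] by simp
      have "q *\<^sub>R c' = q *\<^sub>R x' - (q / real (p^e0)) *\<^sub>R rvec t - rvec (ww n)"
        unfolding c'_def ap_def using q by (simp add: scaleR_diff_right)
      also have "\<dots> = q *\<^sub>R x' - real (p^(e-e0)) *\<^sub>R rvec t - rvec (ww n)" unfolding r ..
      finally have "q *\<^sub>R c' = q *\<^sub>R x' - real (p^(e-e0)) *\<^sub>R rvec t - rvec (ww n)" .
      then show "x' \<in> Good \<alpha> e0 n e" unfolding Good_def using x'H t qc q_def by auto
    qed
    then have "z \<in> Ze \<alpha> e0 n e" unfolding Ze_def q_def by simp
    then show "x \<in> UU \<alpha> e0 n e" unfolding UU_def q_def[symmetric] using xz by blast
  qed
qed

end


context setting begin

lemma lower_fixed: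
  assumes "\<beta> < measure lebesgue (K \<alpha> e0 n)"
  shows "eventually (\<lambda>e. \<beta> \<le> real (card (Fe e \<alpha>)) / real (p^e) ^ CARD('n)) sequentially"
proof -
  define W where "W Q = K \<alpha> e0 n \<inter> (\<Inter>e\<in>{Q+e0..}. UU \<alpha> e0 n e)" for Q
  have Ws: "W Q \<in> sets lebesgue" for Q
    unfolding W_def
  proof (intro sets.Int fmeasurableD[OF K_lmeas] sets.countable_INT')
    show "countable {Q+e0..}" by simp
    show "{Q+e0..} \<noteq> {}" by auto
    show "(\<lambda>e. UU \<alpha> e0 n e) ` {Q + e0..} \<subseteq> sets lebesgue"
      using UU_meas(1) by (auto intro: fmeasurableD)
  qed
  have inc: "incseq W" unfolding incseq_def W_def by auto
  have UW: "(\<Union>Q. W Q) = K \<alpha> e0 n"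
  proof (intro equalityI subsetI)
    fix x assume "x \<in> (\<Union>Q. W Q)" then show "x \<in> K \<alpha> e0 n" unfolding W_def by blast
  next
    fix x assume x: "x \<in> K \<alpha> e0 n"
    obtain N where N: "\<And>e. e \<ge> N \<Longrightarrow> x \<in> UU \<alpha> e0 n e"
      using pointwise[OF x] unfolding eventually_sequentially by blast
    have "x \<in> W N" unfolding W_def using x N by auto
    then show "x \<in> (\<Union>Q. W Q)" by blast
  qed
  have lim: "(\<lambda>Q. measure lebesgue (W Q)) \<longlonglongrightarrow> measure lebesgue (\<Union>Q. W Q)"
  proof (rule Lim_measure_incseq)
    show "range W \<subseteq> sets lebesgue" using Ws by blast
    show "incseq W" by (rule inc)
    show "emeasure lebesgue (\<Union>Q. W Q) \<noteq> \<infinity>" unfolding UW using fmeasurableD2[OF K_lmeas] by simp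
  qed
  then have "eventually (\<lambda>Q. \<beta> < measure lebesgue (W Q)) sequentially"
    using order_tendstoD(1) assms unfolding UW by blast
  then obtain Q where Q: "\<beta> < measure lebesgue (W Q)" unfolding eventually_sequentially by blast
  have "eventually (\<lambda>e. Q + e0 \<le> e) sequentially" by (rule eventually_ge_at_top)
  then show ?thesis
  proof (rule eventually_mono)
    fix e assume e: "Q + e0 \<le> e"
    have "W Q \<subseteq> UU \<alpha> e0 n e" unfolding W_def using e by auto
    then have "measure lebesgue (W Q) \<le> measure lebesgue (UU \<alpha> e0 n e)"
      using Ws UU_meas(1)[of e0 e] e by (intro measure_mono_fmeasurable) auto
    then show "\<beta> \<le> real (card (Fe e \<alpha>)) / real (p^e) ^ CARD('n)"
      using UU_meas(2)[of e0 e \<alpha> n] e Q by linarith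
  qed
qed

lemma lower_ev:
  assumes "\<epsilon> > 0"
  shows "eventually (\<lambda>e. measure lebesgue (p_body p S T \<inter> Hs \<alpha>) - \<epsilon>
           \<le> real (card (Fe e \<alpha>)) / real (p^e) ^ CARD('n)) sequentially"
proof -
  define V where "V = measure lebesgue (p_body p S T \<inter> Hs \<alpha>)"
  have inc: "incseq (\<lambda>e. Dl e \<inter> Hs \<alpha>)" using incseq_Dl unfolding incseq_def by blast
  have UD: "(\<Union>e. Dl e \<inter> Hs \<alpha>) = p_body p S T \<inter> Hs \<alpha>" unfolding body_eq by blast
  have lim: "(\<lambda>e. measure lebesgue (Dl e \<inter> Hs \<alpha>)) \<longlonglongrightarrow> measure lebesgue (\<Union>e. Dl e \<inter> Hs \<alpha>)"
  proof (rule Lim_measure_incseq)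
    have "Dl e \<inter> Hs \<alpha> \<in> sets lebesgue" for e by (rule sets.Int[OF Dl_sets open_lebesgue[OF Hs_open]])
    then show "range (\<lambda>e. Dl e \<inter> Hs \<alpha>) \<subseteq> sets lebesgue" by blast
    show "incseq (\<lambda>e. Dl e \<inter> Hs \<alpha>)" by (rule inc)
    show "emeasure lebesgue (\<Union>e. Dl e \<inter> Hs \<alpha>) \<noteq> \<infinity>" unfolding UD using fmeasurableD2[OF body_H_lmeas] by simp
  qed
  have "eventually (\<lambda>e. V - \<epsilon>/2 < measure lebesgue (Dl e \<inter> Hs \<alpha>)) sequentially"
    using order_tendstoD(1)[OF lim] assms unfolding UD V_def by simp
  then obtain e0 where e0: "V - \<epsilon>/2 < measure lebesgue (Dl e0 \<inter> Hs \<alpha>)"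
    unfolding eventually_sequentially by blast
  have "V - \<epsilon>/2 < measure lebesgue (\<Union>n. K \<alpha> e0 n)" using e0 Dl_le_UK[of e0 \<alpha>] by linarith
  then have "V - \<epsilon> < measure lebesgue (\<Union>n. K \<alpha> e0 n) - \<epsilon>/2" by linarith
  moreover have "eventually (\<lambda>n. measure lebesgue (\<Union>n. K \<alpha> e0 n) - \<epsilon>/2 < measure lebesgue (K \<alpha> e0 n)) sequentially"
    using order_tendstoD(1)[OF K_lim] assms by simp
  then obtain n where "measure lebesgue (\<Union>n. K \<alpha> e0 n) - \<epsilon>/2 < measure lebesgue (K \<alpha> e0 n)"
    unfolding eventually_sequentially by blast
  ultimately have "V - \<epsilon> < measure lebesgue (K \<alpha> e0 n)" by linarith
  from lower_fixed[OF this] show ?thesis unfolding V_def .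
qed

lemma main_limit:
  "(\<lambda>e. real (card (Fe e \<alpha>)) / real (p^e) ^ CARD('n)) \<longlonglongrightarrow> measure lebesgue (p_body p S T \<inter> Hs \<alpha>)"
proof (rule order_tendstoI)
  fix a assume a: "a < measure lebesgue (p_body p S T \<inter> Hs \<alpha>)"
  define \<epsilon> where "\<epsilon> = (measure lebesgue (p_body p S T \<inter> Hs \<alpha>) - a) / 2"
  have "\<epsilon> > 0" using a unfolding \<epsilon>_def by simp
  from lower_ev[OF this, of \<alpha>] show "eventually (\<lambda>e. a < real (card (Fe e \<alpha>)) / real (p^e) ^ CARD('n)) sequentially"
  proof (rule eventually_mono)
    fix e assume h: "measure lebesgue (p_body p S T \<inter> Hs \<alpha>) - \<epsilon> \<le> real (card (Fe e \<alpha>)) / real (p^e) ^ CARD('n)"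
    have aux: "\<And>M f a. M - (M - a)/2 \<le> f \<Longrightarrow> a < M \<Longrightarrow> a < (f::real)" by (simp add: field_simps)
    show "a < real (card (Fe e \<alpha>)) / real (p^e) ^ CARD('n)" using h a unfolding \<epsilon>_def by (rule aux)
  qed
next
  fix a assume a: "measure lebesgue (p_body p S T \<inter> Hs \<alpha>) < a"
  define \<epsilon> where "\<epsilon> = (a - measure lebesgue (p_body p S T \<inter> Hs \<alpha>)) / 2"
  have "\<epsilon> > 0" using a unfolding \<epsilon>_def by simp
  from upper_ev[OF this, of \<alpha>] show "eventually (\<lambda>e. real (card (Fe e \<alpha>)) / real (p^e) ^ CARD('n) < a) sequentially"
  proof (rule eventually_mono)
    fix e assume h: "real (card (Fe e \<alpha>)) / real (p^e) ^ CARD('n) \<le> measure lebesgue (p_body p S T \<inter> Hs \<alpha>) + \<epsilon>"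
    have aux: "\<And>M f a. f \<le> M + (a - M)/2 \<Longrightarrow> M < a \<Longrightarrow> (f::real) < a" by (simp add: field_simps)
    show "real (card (Fe e \<alpha>)) / real (p^e) ^ CARD('n) < a" using h a unfolding \<epsilon>_def by (rule aux)
  qed
qed

end

theorem mainTheorem6:
  fixes p :: nat and S :: "(int^'n) set" and T :: "nat \<Rightarrow> (int^'n) set" and H :: "(real^'n) set"
  assumes "prime p"
    and "standard_semigroup S"
    and "p_system p S T"
    and "truncating_halfspace (cone_of (rvec ` S)) H"
  shows "(\<lambda>e. real (card {t \<in> T (p ^ e). rvec t \<in> (\<lambda>u. real (p ^ e) *\<^sub>R u) ` H})
                / real (p ^ e) ^ CARD('n))
         \<longlonglongrightarrow> measure lebesgue (p_body p S T \<inter> H)"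
proof -
  obtain b \<alpha> where b: "\<forall>u\<in>cone_of (rvec ` S). u \<noteq> 0 \<longrightarrow> inner u b > 0" and H: "H = {u. inner u b < \<alpha>}"
    using assms(4) unfolding truncating_halfspace_def by blast
  have st: "is_semigroup S" "{x - y |x y. x \<in> S \<and> y \<in> S} = UNIV"
    using assms(2) unfolding standard_semigroup_def by auto
  interpret setting p S T b
    by (unfold_locales) (use prime_ge_2_nat[OF assms(1)] st assms(3) b in auto)
  have HH: "H = Hs \<alpha>" unfolding H Hs_def ..
  show ?thesis using main_limit[of \<alpha>] unfolding HH Fe_def .
qed


end
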